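(* Let $m$ and $n$ be positive integers with $m=O(n^r)$, where $r\in\mathbb{R}$ and $r\ge 1$. For every pair of positive integers $k,\ell$ with $k\ge 3$, there exists a positive integer $N_3=N_3(k,\ell)$ such that $px_{k,\ell}(K_{m,n})=2$ for every integer $n\ge N_3$.
   Context: Here $m=m(n)$ is regarded as a function of $n$ with $m=O(n^r)$. All graphs are finite, simple and undirected; $K_{m,n}$ is the complete bipartite graph with parts of sizes $m$ and $n$. An edge-coloring of a graph may assign the same color to adjacent edges. A tree $T$ in an edge-colored graph is a proper tree if no two adjacent edges of $T$ receive the same color. For $S\subseteq V(G)$ with $|S|\ge 2$, an $S$-tree is a tree in $G$ containing all vertices of $S$. $S$-trees $T_1,\dots,T_\ell$ are internally disjoint if $E(T_i)\cap E(T_j)=\emptyset$ and $V(T_i)\cap V(T_j)=S$ for all $i\ne j$. For a connected graph $G$ of order $n$ and integers $k,\ell$ with $2\le k\le n$ and $1\le \ell\le \kappa_k(G)$ (where $\kappa_k(G)$ is the minimum, over all $k$-subsets $S$ of $V(G)$, of the maximum number of internally disjoint $S$-trees), the $(k,\ell)$-proper index $px_{k,\ell}(G)$ is the minimum number of colors in an edge-coloring of $G$ such that for every $k$-subset $S$ of $V(G)$ there exist $\ell$ internally disjoint proper $S$-trees. *)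

theory Defs
  imports Main "HOL-Library.Landau_Symbols"
begin

definition simple_graph :: "'a set \<Rightarrow> 'a set set \<Rightarrow> bool" where
  "simple_graph V E \<longleftrightarrow> finite V \<and> (\<forall>e\<in>E. e \<subseteq> V \<and> card e = 2)"

definition connected_graph :: "'a set \<Rightarrow> 'a set set \<Rightarrow> bool" where
  "connected_graph V E \<longleftrightarrow> V \<noteq> {} \<and>
     (\<forall>u\<in>V. \<forall>v\<in>V. (\<lambda>x y. {x, y} \<in> E)\<^sup>*\<^sup>* u v)"

definition has_cycle :: "'a set set \<Rightarrow> bool" where
  "has_cycle E \<longleftrightarrow> (\<exists>vs. length vs \<ge> 3 \<and> distinct vs \<and>
      (\<forall>i < length vs - 1. {vs ! i, vs ! (i + 1)} \<in> E) \<and> {last vs, hd vs} \<in> E)"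

definition is_tree :: "'a set \<Rightarrow> 'a set set \<Rightarrow> bool" where
  "is_tree V E \<longleftrightarrow> simple_graph V E \<and> connected_graph V E \<and> \<not> has_cycle E"

definition S_tree :: "'a set \<Rightarrow> 'a set set \<Rightarrow> 'a set \<Rightarrow> 'a set \<Rightarrow> 'a set set \<Rightarrow> bool" where
  "S_tree V E S VT ET \<longleftrightarrow> VT \<subseteq> V \<and> ET \<subseteq> E \<and> is_tree VT ET \<and> S \<subseteq> VT"

definition proper_tree :: "('a set \<Rightarrow> nat) \<Rightarrow> 'a set set \<Rightarrow> bool" where
  "proper_tree col ET \<longleftrightarrow>
     (\<forall>e\<in>ET. \<forall>f\<in>ET. e \<noteq> f \<and> e \<inter> f \<noteq> {} \<longrightarrow> col e \<noteq> col f)"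

definition good_colouring ::
    "nat \<Rightarrow> nat \<Rightarrow> 'a set \<Rightarrow> 'a set set \<Rightarrow> nat \<Rightarrow> ('a set \<Rightarrow> nat) \<Rightarrow> bool" where
  "good_colouring k l V E c col \<longleftrightarrow> (\<forall>e\<in>E. col e < c) \<and>
     (\<forall>S. S \<subseteq> V \<and> card S = k \<longrightarrow>
        (\<exists>T :: nat \<Rightarrow> 'a set \<times> 'a set set.
           (\<forall>i<l. S_tree V E S (fst (T i)) (snd (T i)) \<and> proper_tree col (snd (T i))) \<and>
           (\<forall>i<l. \<forall>j<l. i \<noteq> j \<longrightarrow>
               snd (T i) \<inter> snd (T j) = {} \<and> fst (T i) \<inter> fst (T j) = S)))"

definition proper_index :: "nat \<Rightarrow> nat \<Rightarrow> 'a set \<Rightarrow> 'a set set \<Rightarrow> nat" where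
  "proper_index k l V E = (LEAST c. \<exists>col. good_colouring k l V E c col)"

definition Kmn_V :: "nat \<Rightarrow> nat \<Rightarrow> (nat + nat) set" where
  "Kmn_V m n = Inl ` {0..<m} \<union> Inr ` {0..<n}"

definition Kmn_E :: "nat \<Rightarrow> nat \<Rightarrow> (nat + nat) set set" where
  "Kmn_E m n = {{Inl i, Inr j} | i j. i < m \<and> j < n}"

end

theory Submission
  imports Defs
begin

fun pedges :: "'a list \<Rightarrow> 'a set set" where
  "pedges (x # y # r) = insert {x, y} (pedges (y # r))"
| "pedges _ = {}"

fun pp :: "('a set \<Rightarrow> nat) \<Rightarrow> 'a set set \<Rightarrow> 'a list \<Rightarrow> bool" where
  "pp col E (x # y # z # r) = ({x, y} \<in> E \<and> col {x, y} \<noteq> col {y, z} \<and> pp col E (y # z # r))"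
| "pp col E [x, y] = ({x, y} \<in> E)"
| "pp col E _ = True"

lemma pedges_sub: "e \<in> pedges p \<Longrightarrow> e \<subseteq> set p"
  by (induction p rule: pedges.induct) auto

lemma pedges_card: "distinct p \<Longrightarrow> e \<in> pedges p \<Longrightarrow> card e = 2"
  by (induction p rule: pedges.induct) auto

lemma pp_E: "pp col E p \<Longrightarrow> pedges p \<subseteq> E"
  by (induction p rule: pp.induct) auto

lemma noC: "distinct p \<Longrightarrow> (\<forall>v\<in>C. \<exists>u w. u \<noteq> w \<and> u \<in> C \<and> w \<in> C \<and> {v,u} \<in> pedges p \<and> {v,w} \<in> pedges p) \<Longrightarrow> C = {}"
proof (induction p arbitrary: C rule: pedges.induct)
  case (1 x y r)
  have xn: "x \<notin> C"
  proof
    assume xC: "x \<in> C"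
    then obtain u w where uw: "u \<noteq> w" "{x,u} \<in> pedges (x # y # r)" "{x,w} \<in> pedges (x # y # r)"
      using "1.prems"(2) by blast
    have "u = y" if "{x,u} \<in> pedges (x # y # r)" for u
    proof -
      from that have "{x,u} = {x,y} \<or> {x,u} \<in> pedges (y # r)" by simp
      then show ?thesis
      proof
        assume "{x,u} = {x,y}" then show ?thesis using "1.prems"(1) by (auto simp: doubleton_eq_iff)
      next
        assume "{x,u} \<in> pedges (y # r)"
        then have "x \<in> set (y # r)" using pedges_sub by blast
        then show ?thesis using "1.prems"(1) by simp
      qed
    qed
    then show False using uw by blast
  qed
  have "\<forall>v\<in>C. \<exists>u w. u \<noteq> w \<and> u \<in> C \<and> w \<in> C \<and> {v,u} \<in> pedges (y # r) \<and> {v,w} \<in> pedges (y # r)"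
  proof
    fix v assume "v \<in> C"
    then obtain u w where uw: "u \<noteq> w" "u \<in> C" "w \<in> C" "{v,u} \<in> pedges (x # y # r)" "{v,w} \<in> pedges (x # y # r)"
      using "1.prems"(2) by blast
    have "{v,u} \<noteq> {x,y}" "{v,w} \<noteq> {x,y}" using xn \<open>v \<in> C\<close> uw by (auto simp: doubleton_eq_iff)
    then show "\<exists>u w. u \<noteq> w \<and> u \<in> C \<and> w \<in> C \<and> {v,u} \<in> pedges (y # r) \<and> {v,w} \<in> pedges (y # r)"
      using uw by auto
  qed
  then show ?case using "1.IH" "1.prems"(1) by simp
qed auto

lemma cyc_nbrs:
  assumes "length vs \<ge> 3" "distinct vs" "\<forall>i < length vs - 1. {vs ! i, vs ! (i + 1)} \<in> E"
    "{last vs, hd vs} \<in> E" "v \<in> set vs"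
  shows "\<exists>u w. u \<noteq> w \<and> u \<in> set vs \<and> w \<in> set vs \<and> {v,u} \<in> E \<and> {v,w} \<in> E"
proof -
  let ?n = "length vs"
  obtain i where i: "i < ?n" "v = vs ! i" using assms(5) by (auto simp: in_set_conv_nth)
  have hd: "hd vs = vs ! 0" using assms(1) by (cases vs) auto
  have lst: "last vs = vs ! (?n - 1)" using assms(1) by (subst last_conv_nth) auto
  have dn: "\<And>a b. a < ?n \<Longrightarrow> b < ?n \<Longrightarrow> a \<noteq> b \<Longrightarrow> vs ! a \<noteq> vs ! b"
    using assms(2) by (simp add: nth_eq_iff_index_eq)
  consider "i = 0" | "i = ?n - 1" | "0 < i \<and> i < ?n - 1" using i by linarith
  then show ?thesis
  proof cases
    case 1
    have "{v, vs ! 1} \<in> E" using assms(3)[rule_format, of 0] assms(1) 1 i by simp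
    moreover have "{v, vs ! (?n - 1)} \<in> E" using assms(4) hd lst 1 i by (simp add: insert_commute)
    moreover have "vs ! 1 \<noteq> vs ! (?n - 1)" using dn assms(1) by simp
    moreover have "vs ! 1 \<in> set vs" "vs ! (?n - 1) \<in> set vs" using assms(1) by (auto intro!: nth_mem)
    ultimately show ?thesis by blast
  next
    case 2
    have "{vs ! (?n - 2), vs ! (?n - 2 + 1)} \<in> E" using assms(3) assms(1) by auto
    moreover have "?n - 2 + 1 = ?n - 1" using assms(1) by simp
    ultimately have "{v, vs ! (?n - 2)} \<in> E" using 2 i by (simp add: insert_commute)
    moreover have "{v, vs ! 0} \<in> E" using assms(4) hd lst 2 i by simp
    moreover have "vs ! (?n - 2) \<noteq> vs ! 0" using dn[of "?n - 2" 0] assms(1) by fastforce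
    moreover have "vs ! (?n - 2) \<in> set vs" "vs ! 0 \<in> set vs" using assms(1) by (auto intro!: nth_mem)
    ultimately show ?thesis by blast
  next
    case 3
    have "{vs ! (i - 1), vs ! (i - 1 + 1)} \<in> E" using assms(3)[rule_format, of "i - 1"] 3 by linarith
    moreover have "i - 1 + 1 = i" using 3 by simp
    ultimately have "{v, vs ! (i - 1)} \<in> E" using i by (simp add: insert_commute)
    moreover have "{v, vs ! (i + 1)} \<in> E" using assms(3) 3 i by simp
    moreover have "vs ! (i - 1) \<noteq> vs ! (i + 1)" proof (rule dn) show "i - 1 < ?n" "i + 1 < ?n" "i - 1 \<noteq> i + 1" using 3 by arith+ qed
    moreover have "vs ! (i - 1) \<in> set vs" "vs ! (i + 1) \<in> set vs" using 3 i by (auto intro!: nth_mem)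
    ultimately show ?thesis by blast
  qed
qed

lemma path_acyc: "distinct p \<Longrightarrow> \<not> has_cycle (pedges p)"
proof
  assume d: "distinct p" and "has_cycle (pedges p)"
  then obtain vs where vs: "length vs \<ge> 3" "distinct vs" "\<forall>i < length vs - 1. {vs ! i, vs ! (i + 1)} \<in> pedges p"
    "{last vs, hd vs} \<in> pedges p" unfolding has_cycle_def by blast
  have "set vs = {}"
  proof (rule noC[OF d], intro ballI)
    fix v assume "v \<in> set vs"
    then show "\<exists>u w. u \<noteq> w \<and> u \<in> set vs \<and> w \<in> set vs \<and> {v,u} \<in> pedges p \<and> {v,w} \<in> pedges p"
      by (rule cyc_nbrs[OF vs])
  qed
  then show False using vs(1) by simp
qed

lemma path_reach: "p \<noteq> [] \<Longrightarrow> v \<in> set p \<Longrightarrow>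
   (\<lambda>x y. {x,y} \<in> pedges p)\<^sup>*\<^sup>* (hd p) v \<and> (\<lambda>x y. {x,y} \<in> pedges p)\<^sup>*\<^sup>* v (hd p)"
proof (induction p rule: pedges.induct)
  case (1 x y r)
  let ?R = "\<lambda>a b. {a,b} \<in> pedges (x # y # r)"
  let ?Q = "\<lambda>a b. {a,b} \<in> pedges (y # r)"
  show ?case
  proof (cases "v = x")
    case True then show ?thesis by simp
  next
    case False
    then have "v \<in> set (y # r)" using "1.prems" by simp
    then have h: "?Q\<^sup>*\<^sup>* y v" "?Q\<^sup>*\<^sup>* v y" using "1.IH" by auto
    have m: "?Q\<^sup>*\<^sup>* a b \<Longrightarrow> ?R\<^sup>*\<^sup>* a b" for a b by (rule mono_rtranclp[rule_format]) auto
    have "?R x y" "?R y x" by (auto simp: insert_commute)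
    then show ?thesis using m[OF h(1)] m[OF h(2)]
      by (auto intro: converse_rtranclp_into_rtranclp rtranclp.rtrancl_into_rtrancl)
  qed
qed auto

lemma path_conn: "p \<noteq> [] \<Longrightarrow> connected_graph (set p) (pedges p)"
  unfolding connected_graph_def
proof (intro conjI ballI)
  assume "p \<noteq> []" then show "set p \<noteq> {}" by simp
next
  fix u v assume "p \<noteq> []" "u \<in> set p" "v \<in> set p"
  then show "(\<lambda>x y. {x, y} \<in> pedges p)\<^sup>*\<^sup>* u v"
    using path_reach[of p u] path_reach[of p v] rtranclp_trans[of "\<lambda>x y. {x, y} \<in> pedges p" u "hd p" v] by blast
qed

lemma path_tree: "distinct p \<Longrightarrow> p \<noteq> [] \<Longrightarrow> is_tree (set p) (pedges p)"
  unfolding is_tree_def simple_graph_def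
proof (intro conjI ballI)
  assume "distinct p" "p \<noteq> []"
  then show "connected_graph (set p) (pedges p)" "\<not> has_cycle (pedges p)"
    using path_conn path_acyc by auto
  fix e assume "e \<in> pedges p"
  then show "e \<subseteq> set p" "card e = 2" using pedges_sub pedges_card \<open>distinct p\<close> by auto
qed simp

lemma path_proper: "distinct p \<Longrightarrow> pp col E p \<Longrightarrow> proper_tree col (pedges p)"
  unfolding proper_tree_def
proof (induction p rule: pedges.induct)
  case (1 x y r0)
  show ?case
  proof (cases r0)
    case Nil
    then show ?thesis by auto
  next
    case (Cons z r)
    note r0 = Cons
    have pr: "distinct (x # y # z # r)" "pp col E (x # y # z # r)" using "1.prems" r0 by auto
    have ih: "\<forall>e\<in>pedges (y # z # r). \<forall>f\<in>pedges (y # z # r). e \<noteq> f \<and> e \<inter> f \<noteq> {} \<longrightarrow> col e \<noteq> col f"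
      using "1.IH" pr r0 by simp
    show ?thesis unfolding r0
    proof (intro ballI impI)
      fix e f assume ef: "e \<in> pedges (x # y # z # r)" "f \<in> pedges (x # y # z # r)" "e \<noteq> f \<and> e \<inter> f \<noteq> {}"
      have key: "g = {y,z}" if "g \<in> pedges (y # z # r)" "g \<inter> {x,y} \<noteq> {}" for g
      proof -
        have "x \<notin> g" using that(1) pedges_sub pr(1) by fastforce
        then have "y \<in> g" using that(2) by auto
        moreover have "y \<notin> set (z # r)" using pr(1) by simp
        ultimately show ?thesis using that(1) pedges_sub by fastforce
      qed
      show "col e \<noteq> col f"
      proof (cases "e = {x,y}")
        case True
        then have "f \<in> pedges (y # z # r)" using ef by auto
        then have "f = {y,z}" using key ef True by blast
        then show ?thesis using True pr(2) by simp
      next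
        case False
        then have e2: "e \<in> pedges (y # z # r)" using ef by auto
        show ?thesis
        proof (cases "f = {x,y}")
          case True
          then have "e = {y,z}" using key ef e2 by blast
          then show ?thesis using True pr(2) by simp
        next
          case False
          then have "f \<in> pedges (y # z # r)" using ef by auto
          then show ?thesis using ih e2 ef by blast
        qed
      qed
    qed
  qed
qed auto

lemma fresh_elem: "finite F \<Longrightarrow> finite C \<Longrightarrow> card F < card C \<Longrightarrow> \<exists>c\<in>C. c \<notin> F"
proof (rule ccontr)
  assume "finite F" "finite C" "card F < card C" "\<not> (\<exists>c\<in>C. c \<notin> F)"
  then have "C \<subseteq> F" by blast
  then have "card C \<le> card F" using \<open>finite F\<close> by (rule card_mono[rotated])
  then show False using \<open>card F < card C\<close> by simp
qed

lemma pedges_mid: "mid \<noteq> [] \<Longrightarrow> p \<noteq> [] \<Longrightarrow> pedges (x # mid @ p) \<subseteq> pedges p \<union> {e. e \<inter> set mid \<noteq> {}}"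
proof (induction mid arbitrary: x)
  case (Cons a mid)
  show ?case
  proof (cases "mid = []")
    case True
    then show ?thesis using Cons.prems by (cases p) auto
  next
    case False
    then have "pedges (a # mid @ p) \<subseteq> pedges p \<union> {e. e \<inter> set mid \<noteq> {}}" using Cons by blast
    then show ?thesis by (cases mid) auto
  qed
qed simp

locale kmn =
  fixes M n L :: nat and col :: "(nat + nat) set \<Rightarrow> nat"
  assumes col2: "\<And>e. col e < 2"
    and Qp: "\<And>j c. j < n \<Longrightarrow> c < 2 \<Longrightarrow> L \<le> card {i. i < M \<and> col {Inl i, Inr j} = c}"
    and Pp: "\<And>i i' c. i < M \<Longrightarrow> i' < M \<Longrightarrow> i \<noteq> i' \<Longrightarrow> c < 2 \<Longrightarrow>
               L \<le> card {j. j < n \<and> col {Inl i, Inr j} = 1 - c \<and> col {Inl i', Inr j} = c}"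
begin

definition req :: "(nat + nat) list \<Rightarrow> nat" where
  "req p = (case p of y # z # _ \<Rightarrow> 1 - col {y, z} | _ \<Rightarrow> 0)"

lemma req_cons2[simp]: "req (a # b # r) = 1 - col {a, b}" by (simp add: req_def)
lemma req_single[simp]: "req [a] = 0" by (simp add: req_def)
lemma req_lt: "req p < 2" by (auto simp: req_def split: list.split)

lemma colsym[simp]: "col {Inr j, Inl i} = col {Inl i, Inr j}" by (simp add: insert_commute)

lemma inE[simp]: "{Inl i, Inr j} \<in> Kmn_E M n \<longleftrightarrow> i < M \<and> j < n"
proof
  assume "{Inl i, Inr j} \<in> Kmn_E M n"
  then obtain a b where "{Inl i, Inr j} = {Inl a, Inr b}" "a < M" "b < n" unfolding Kmn_E_def by blast
  then show "i < M \<and> j < n" by (simp add: doubleton_eq_iff)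
qed (auto simp: Kmn_E_def)

lemma inE'[simp]: "{Inr j, Inl i} \<in> Kmn_E M n \<longleftrightarrow> i < M \<and> j < n"
  by (simp add: insert_commute)

lemma inV: "v \<in> Kmn_V M n \<longleftrightarrow> (\<exists>i<M. v = Inl i) \<or> (\<exists>j<n. v = Inr j)"
  by (auto simp: Kmn_V_def)

lemma inVl[simp]: "Inl i \<in> Kmn_V M n \<longleftrightarrow> i < M" by (auto simp: Kmn_V_def)
lemma inVr[simp]: "Inr j \<in> Kmn_V M n \<longleftrightarrow> j < n" by (auto simp: Kmn_V_def)

lemma pp_cons: "pp col E (x # y # r)" if "pp col E (y # r)" "{x, y} \<in> E" "col {x, y} = req (y # r)"
proof (cases r)
  case Nil then show ?thesis using that by simp
next
  case (Cons z r')
  have "col {y, z} < 2" by (rule col2)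
  then have "col {y, z} = 0 \<or> col {y, z} = 1" by linarith
  then have "1 - col {y, z} \<noteq> col {y, z}" by auto
  then show ?thesis using that Cons by simp
qed

lemma chooseA:
  fixes F :: "(nat + nat) set"
  assumes "j < n" "c < 2" "finite F" "card F < L"
  shows "\<exists>i<M. Inl i \<notin> F \<and> col {Inl i, Inr j} = c"
proof -
  let ?C = "{i. i < M \<and> col {Inl i, Inr j} = c}"
  let ?F = "Inl -` F :: nat set"
  have fF: "finite ?F" using assms(3) by (rule finite_vimageI) (simp add: inj_on_def)
  have sub: "(Inl ` ?F :: (nat + nat) set) \<subseteq> F" by auto
  have "card (Inl ` ?F :: (nat + nat) set) \<le> card F" by (rule card_mono[OF assms(3) sub])
  moreover have "card (Inl ` ?F :: (nat + nat) set) = card ?F" by (rule card_image) (simp add: inj_on_def)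
  ultimately have "card ?F < card ?C" using Qp[OF assms(1,2)] assms(4) by linarith
  moreover have fC: "finite ?C" by simp
  ultimately obtain i where "i \<in> ?C" "i \<notin> ?F" using fresh_elem[OF fF fC] by blast
  then show ?thesis by auto
qed

lemma chooseB:
  fixes F :: "(nat + nat) set"
  assumes "i < M" "i' < M" "i \<noteq> i'" "c < 2" "finite F" "card F < L"
  shows "\<exists>j<n. Inr j \<notin> F \<and> col {Inl i, Inr j} = 1 - c \<and> col {Inl i', Inr j} = c"
proof -
  let ?C = "{j. j < n \<and> col {Inl i, Inr j} = 1 - c \<and> col {Inl i', Inr j} = c}"
  let ?F = "Inr -` F :: nat set"
  have fF: "finite ?F" using assms(5) by (rule finite_vimageI) (simp add: inj_on_def)
  have sub: "(Inr ` ?F :: (nat + nat) set) \<subseteq> F" by auto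
  have "card (Inr ` ?F :: (nat + nat) set) \<le> card F" by (rule card_mono[OF assms(5) sub])
  moreover have "card (Inr ` ?F :: (nat + nat) set) = card ?F" by (rule card_image) (simp add: inj_on_def)
  ultimately have "card ?F < card ?C" using Pp[OF assms(1-4)] assms(6) by linarith
  moreover have fC: "finite ?C" by simp
  ultimately obtain j where "j \<in> ?C" "j \<notin> ?F" using fresh_elem[OF fF fC] by blast
  then show ?thesis by auto
qed


lemma one_minus2: "c < 2 \<Longrightarrow> 1 - (1 - c) = (c::nat)" by auto

lemma seg:
  fixes F :: "(nat + nat) set" and p :: "(nat + nat) list"
  assumes pp: "pp col (Kmn_E M n) p" and dp: "distinct p" and pne: "p \<noteq> []"
    and pV: "set p \<subseteq> Kmn_V M n" and xV: "x \<in> Kmn_V M n" and xp: "x \<notin> set p"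
    and fF: "finite F" and pF: "set p \<subseteq> F" and xF: "x \<in> F" and cF: "card F + 2 \<le> L"
  shows "\<exists>mid. pp col (Kmn_E M n) (x # mid @ p) \<and> distinct (x # mid @ p) \<and> set mid \<inter> F = {}
     \<and> length mid \<le> 3 \<and> set mid \<subseteq> Kmn_V M n \<and> pedges (x # mid @ p) \<subseteq> pedges p \<union> {e. e \<inter> set mid \<noteq> {}}"
proof -
  have gen: "?thesis" if "pp col (Kmn_E M n) (x # mid @ p)" "distinct mid" "set mid \<inter> F = {}"
    "length mid \<le> 3" "set mid \<subseteq> Kmn_V M n" "mid \<noteq> []" for mid
  proof (intro exI[of _ mid] conjI)
    show "distinct (x # mid @ p)" using that(2,3) dp xp pF xF by auto
    show "pedges (x # mid @ p) \<subseteq> pedges p \<union> {e. e \<inter> set mid \<noteq> {}}" by (rule pedges_mid[OF that(6) pne])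
  qed (use that in auto)
  obtain y r where p: "p = y # r" using pne by (cases p) auto
  define c0 where "c0 = req p"
  have c0: "c0 < 2" using req_lt c0_def by simp
  have yV: "y \<in> Kmn_V M n" using pV p by auto
  have yF: "y \<in> F" using pF p by auto
  have cF1: "card F < L" using cF by simp
  have cF2: "card (insert v F) < L" for v using cF fF by (simp add: card_insert_if)
  have pp0: "pp col (Kmn_E M n) (y # r)" using pp p by simp
  have rq: "req (y # r) = c0" using c0_def p by simp
  from yV consider (yl) iy where "iy < M" "y = Inl iy" | (yr) jy where "jy < n" "y = Inr jy" by (auto simp: inV)
  then show ?thesis
  proof cases
    case yl
    from xV consider (xl) ix where "ix < M" "x = Inl ix" | (xr) jx where "jx < n" "x = Inr jx" by (auto simp: inV)
    then show ?thesis
    proof cases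
      case xl
      have "ix \<noteq> iy" using xp p xl yl by auto
      then obtain j where j: "j < n" "Inr j \<notin> F" "col {Inl ix, Inr j} = 1 - c0" "col {Inl iy, Inr j} = c0"
        using chooseB[OF xl(1) yl(1) _ c0 fF cF1] by blast
      have pp1: "pp col (Kmn_E M n) (Inr j # y # r)"
        by (rule pp_cons[OF pp0]) (use j yl rq in auto)
      have pp2: "pp col (Kmn_E M n) (x # Inr j # y # r)"
        by (rule pp_cons[OF pp1]) (use j yl xl in auto)
      show ?thesis by (rule gen[of "[Inr j]"]) (use pp2 p j in auto)
    next
      case xr
      obtain ia where ia: "ia < M" "Inl ia \<notin> F" "col {Inl ia, Inr jx} = c0"
        using chooseA[OF xr(1) c0 fF cF1] by blast
      have "ia \<noteq> iy" using ia yF yl by auto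
      then obtain j where j: "j < n" "Inr j \<notin> F" "col {Inl ia, Inr j} = 1 - c0" "col {Inl iy, Inr j} = c0"
        using chooseB[OF ia(1) yl(1) _ c0 fF cF1] by blast
      have pp1: "pp col (Kmn_E M n) (Inr j # y # r)"
        by (rule pp_cons[OF pp0]) (use j yl rq in auto)
      have pp2: "pp col (Kmn_E M n) (Inl ia # Inr j # y # r)"
        by (rule pp_cons[OF pp1]) (use j yl ia in auto)
      have pp3: "pp col (Kmn_E M n) (x # Inl ia # Inr j # y # r)"
        by (rule pp_cons[OF pp2]) (use j ia xr c0 one_minus2 in auto)
      show ?thesis by (rule gen[of "[Inl ia, Inr j]"]) (use pp3 p j ia in auto)
    qed
  next
    case yr
    obtain iy where iy: "iy < M" "Inl iy \<notin> F" "col {Inl iy, Inr jy} = c0"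
      using chooseA[OF yr(1) c0 fF cF1] by blast
    define c1 where "c1 = 1 - c0"
    have c1: "c1 < 2" using c1_def by simp
    have pp1: "pp col (Kmn_E M n) (Inl iy # y # r)"
      by (rule pp_cons[OF pp0]) (use iy yr rq in auto)
    from xV consider (xl) ix where "ix < M" "x = Inl ix" | (xr) jx where "jx < n" "x = Inr jx" by (auto simp: inV)
    then show ?thesis
    proof cases
      case xl
      have "ix \<noteq> iy" using iy xF xl by auto
      then obtain j where j: "j < n" "Inr j \<notin> F" "col {Inl ix, Inr j} = 1 - c1" "col {Inl iy, Inr j} = c1"
        using chooseB[OF xl(1) iy(1) _ c1 fF cF1] by blast
      have pp2: "pp col (Kmn_E M n) (Inr j # Inl iy # y # r)"
        by (rule pp_cons[OF pp1]) (use j iy yr c1_def in auto)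
      have pp3: "pp col (Kmn_E M n) (x # Inr j # Inl iy # y # r)"
        by (rule pp_cons[OF pp2]) (use j xl in auto)
      show ?thesis by (rule gen[of "[Inr j, Inl iy]"]) (use pp3 p j iy in auto)
    next
      case xr
      obtain ix where ix: "ix < M" "Inl ix \<notin> insert (Inl iy) F" "col {Inl ix, Inr jx} = c1"
        using chooseA[OF xr(1) c1 _ cF2] fF by blast
      have "ix \<noteq> iy" using ix by auto
      then obtain j where j: "j < n" "Inr j \<notin> F" "col {Inl ix, Inr j} = 1 - c1" "col {Inl iy, Inr j} = c1"
        using chooseB[OF ix(1) iy(1) _ c1 fF cF1] by blast
      have pp2: "pp col (Kmn_E M n) (Inr j # Inl iy # y # r)"
        by (rule pp_cons[OF pp1]) (use j iy yr c1_def in auto)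
      have pp3: "pp col (Kmn_E M n) (Inl ix # Inr j # Inl iy # y # r)"
        by (rule pp_cons[OF pp2]) (use j ix in auto)
      have pp4: "pp col (Kmn_E M n) (x # Inl ix # Inr j # Inl iy # y # r)"
        by (rule pp_cons[OF pp3]) (use j ix xr c1 one_minus2 in auto)
      show ?thesis by (rule gen[of "[Inl ix, Inr j, Inl iy]"]) (use pp4 p j ix iy in auto)
    qed
  qed
qed

end

context kmn
begin

lemma build:
  fixes S U :: "(nat + nat) set"
  assumes "distinct ss" "ss \<noteq> []" "set ss \<subseteq> S" "S \<subseteq> Kmn_V M n" "finite S" "finite U"
    "card U + card S + 4 * length ss + 2 \<le> L"
  shows "\<exists>p. pp col (Kmn_E M n) p \<and> distinct p \<and> p \<noteq> [] \<and> set p \<subseteq> Kmn_V M n \<and> set ss \<subseteq> set p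
     \<and> (set p - set ss) \<inter> (U \<union> S) = {} \<and> card (set p) \<le> 4 * length ss \<and> (\<forall>e\<in>pedges p. \<not> e \<subseteq> S)"
  using assms
proof (induction ss)
  case Nil
  then show ?case by simp
next
  case (Cons x ss)
  show ?case
  proof (cases "ss = []")
    case True
    show ?thesis
      by (rule exI[of _ "[x]"]) (use Cons.prems True in auto)
  next
    case False
    from Cons.IH[OF _ False] Cons.prems obtain p where p:
      "pp col (Kmn_E M n) p" "distinct p" "p \<noteq> []" "set p \<subseteq> Kmn_V M n" "set ss \<subseteq> set p"
      "(set p - set ss) \<inter> (U \<union> S) = {}" "card (set p) \<le> 4 * length ss" "\<forall>e\<in>pedges p. \<not> e \<subseteq> S"
      by auto
    define F where "F = U \<union> S \<union> set p"
    have fF: "finite F" using Cons.prems F_def by simp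
    have xS: "x \<in> S" using Cons.prems by simp
    have xp: "x \<notin> set p" using p(6) xS Cons.prems(1) by auto
    have "card F \<le> card U + card S + card (set p)"
    proof -
      have "card (U \<union> S \<union> set p) \<le> card (U \<union> S) + card (set p)" by (rule card_Un_le)
      moreover have "card (U \<union> S) \<le> card U + card S" by (rule card_Un_le)
      ultimately show ?thesis by (simp add: F_def)
    qed
    then have cF: "card F + 2 \<le> L" using p(7) Cons.prems(7) by simp
    obtain mid where mid: "pp col (Kmn_E M n) (x # mid @ p)" "distinct (x # mid @ p)" "set mid \<inter> F = {}"
      "length mid \<le> 3" "set mid \<subseteq> Kmn_V M n" "pedges (x # mid @ p) \<subseteq> pedges p \<union> {e. e \<inter> set mid \<noteq> {}}"
      using seg[OF p(1-4) _ xp fF _ _ cF] xS Cons.prems(4) F_def by blast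
    have c1: "card (set (x # mid @ p)) \<le> 1 + (card (set mid) + card (set p))"
    proof -
      have "card (insert x (set mid \<union> set p)) \<le> Suc (card (set mid \<union> set p))"
        by (simp add: card_insert_if)
      moreover have "card (set mid \<union> set p) \<le> card (set mid) + card (set p)" by (rule card_Un_le)
      ultimately show ?thesis by simp
    qed
    have "card (set mid) \<le> 3" using mid(4) card_length le_trans by blast
    then have card: "card (set (x # mid @ p)) \<le> 4 * length (x # ss)" using c1 p(7) by simp
    have ed: "\<forall>e\<in>pedges (x # mid @ p). \<not> e \<subseteq> S"
    proof
      fix e assume "e \<in> pedges (x # mid @ p)"
      then have "e \<in> pedges p \<or> e \<inter> set mid \<noteq> {}" using mid(6) by blast
      then show "\<not> e \<subseteq> S" using p(8) mid(3) F_def by blast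
    qed
    show ?thesis
    proof (intro exI[of _ "x # mid @ p"] conjI)
      show "(set (x # mid @ p) - set (x # ss)) \<inter> (U \<union> S) = {}" using p(6) mid(3) F_def by auto
    qed (use mid p xS Cons.prems(4) card ed in auto)
  qed
qed


definition goodp :: "(nat + nat) set \<Rightarrow> nat \<Rightarrow> (nat + nat) list \<Rightarrow> bool" where
  "goodp S k q \<longleftrightarrow> pp col (Kmn_E M n) q \<and> distinct q \<and> q \<noteq> [] \<and> set q \<subseteq> Kmn_V M n \<and> S \<subseteq> set q
     \<and> card (set q) \<le> 4 * k \<and> (\<forall>e\<in>pedges q. \<not> e \<subseteq> S)"

lemma multi:
  assumes S: "S \<subseteq> Kmn_V M n" "finite S" "card S = k" "1 \<le> k" and L: "4 * k * l + 5 * k + 2 \<le> L"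
  shows "l' \<le> l \<Longrightarrow> \<exists>P. (\<forall>i<l'. goodp S k (P i)) \<and> (\<forall>i<l'. \<forall>j<l'. i \<noteq> j \<longrightarrow> set (P i) \<inter> set (P j) = S)"
proof (induction l')
  case 0 then show ?case by simp
next
  case (Suc l')
  then obtain P where P: "\<forall>i<l'. goodp S k (P i)" "\<forall>i<l'. \<forall>j<l'. i \<noteq> j \<longrightarrow> set (P i) \<inter> set (P j) = S"
    by auto
  define U where "U = (\<Union>i<l'. set (P i) - S)"
  have fU: "finite U" unfolding U_def by auto
  have "card U \<le> (\<Sum>i<l'. card (set (P i) - S))" unfolding U_def by (rule card_UN_le) simp
  also have "\<dots> \<le> (\<Sum>i<l'. 4 * k)"
  proof (rule sum_mono)
    fix i assume "i \<in> {..<l'}"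
    then have "card (set (P i)) \<le> 4 * k" using P(1) by (auto simp: goodp_def)
    moreover have "card (set (P i) - S) \<le> card (set (P i))" by (rule card_mono) auto
    ultimately show "card (set (P i) - S) \<le> 4 * k" by simp
  qed
  also have "\<dots> = l' * (4 * k)" by simp
  finally have cU: "card U \<le> l' * (4 * k)" .
  have m1: "Suc l' * (4 * k) \<le> l * (4 * k)" using Suc.prems by (rule mult_le_mono1)
  have m2: "card U + 4 * k \<le> Suc l' * (4 * k)" using cU by simp
  have m3: "l * (4 * k) = 4 * k * l" by simp
  have cU2: "card U + 4 * k \<le> 4 * k * l" using m1 m2 m3 by linarith
  obtain ss where ss: "set ss = S" "distinct ss" using finite_distinct_list[OF S(2)] by blast
  have len: "length ss = k" using distinct_card[OF ss(2)] ss(1) S(3) by simp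
  have sne: "ss \<noteq> []" using len S(4) by auto
  have cb: "card U + card S + 4 * length ss + 2 \<le> L" using cU2 len S(3) L by simp
  obtain p where p: "pp col (Kmn_E M n) p" "distinct p" "p \<noteq> []" "set p \<subseteq> Kmn_V M n" "set ss \<subseteq> set p"
     "(set p - set ss) \<inter> (U \<union> S) = {}" "card (set p) \<le> 4 * length ss" "\<forall>e\<in>pedges p. \<not> e \<subseteq> S"
    using build[OF ss(2) sne _ S(1) S(2) fU cb] ss(1) by blast
  have gp: "goodp S k p" unfolding goodp_def using p ss(1) len by auto
  have inter: "set p \<inter> set (P i) = S" if "i < l'" for i
  proof
    show "S \<subseteq> set p \<inter> set (P i)" using gp P(1) that by (auto simp: goodp_def)
    show "set p \<inter> set (P i) \<subseteq> S"
    proof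
      fix v assume v: "v \<in> set p \<inter> set (P i)"
      show "v \<in> S"
      proof (rule ccontr)
        assume "v \<notin> S"
        then have "v \<in> U" using v that U_def by auto
        then show False using p(6) v ss(1) \<open>v \<notin> S\<close> by auto
      qed
    qed
  qed
  show ?case
  proof (intro exI[of _ "P(l' := p)"] conjI allI impI)
    fix i assume "i < Suc l'"
    then show "goodp S k ((P(l' := p)) i)" using gp P(1) by (cases "i = l'") auto
  next
    fix i j assume ij: "i < Suc l'" "j < Suc l'" "i \<noteq> j"
    show "set ((P(l' := p)) i) \<inter> set ((P(l' := p)) j) = S"
    proof (cases "i = l'")
      case True
      then show ?thesis using inter ij by auto
    next
      case False
      note iF = False
      show ?thesis
      proof (cases "j = l'")
        case True
        then show ?thesis using inter[of i] ij iF by auto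
      next
        case False
        then show ?thesis using P(2) ij iF by auto
      qed
    qed
  qed
qed

lemma good_col:
  assumes "1 \<le> k" "4 * k * l + 5 * k + 2 \<le> L"
  shows "good_colouring k l (Kmn_V M n) (Kmn_E M n) 2 col"
  unfolding good_colouring_def
proof (intro conjI allI impI)
  show "\<forall>e\<in>Kmn_E M n. col e < 2" using col2 by simp
  fix S assume S: "S \<subseteq> Kmn_V M n \<and> card S = k"
  have fin: "finite S" using S finite_subset[of S "Kmn_V M n"] by (auto simp: Kmn_V_def)
  obtain P where P: "\<forall>i<l. goodp S k (P i)" "\<forall>i<l. \<forall>j<l. i \<noteq> j \<longrightarrow> set (P i) \<inter> set (P j) = S"
    using multi[of S k l l] S fin assms by auto
  show "\<exists>T :: nat \<Rightarrow> (nat + nat) set \<times> (nat + nat) set set.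
           (\<forall>i<l. S_tree (Kmn_V M n) (Kmn_E M n) S (fst (T i)) (snd (T i)) \<and> proper_tree col (snd (T i))) \<and>
           (\<forall>i<l. \<forall>j<l. i \<noteq> j \<longrightarrow>
               snd (T i) \<inter> snd (T j) = {} \<and> fst (T i) \<inter> fst (T j) = S)"
  proof (intro exI[of _ "\<lambda>i. (set (P i), pedges (P i))"] conjI allI impI)
    fix i assume i: "i < l"
    then have g: "goodp S k (P i)" using P(1) by simp
    show "S_tree (Kmn_V M n) (Kmn_E M n) S (fst (set (P i), pedges (P i))) (snd (set (P i), pedges (P i)))"
      unfolding S_tree_def using g pp_E path_tree by (auto simp: goodp_def)
    show "proper_tree col (snd (set (P i), pedges (P i)))"
      using g path_proper by (auto simp: goodp_def)
  next
    fix i j assume ij: "i < l" "j < l" "i \<noteq> j"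
    show "fst (set (P i), pedges (P i)) \<inter> fst (set (P j), pedges (P j)) = S" using P(2) ij by simp
    show "snd (set (P i), pedges (P i)) \<inter> snd (set (P j), pedges (P j)) = {}"
    proof (rule ccontr)
      assume "snd (set (P i), pedges (P i)) \<inter> snd (set (P j), pedges (P j)) \<noteq> {}"
      then obtain e where e: "e \<in> pedges (P i)" "e \<in> pedges (P j)" by auto
      then have "e \<subseteq> set (P i) \<inter> set (P j)" using pedges_sub by blast
      then have "e \<subseteq> S" using P(2) ij by simp
      then show False using e(1) P(1) ij(1) by (auto simp: goodp_def)
    qed
  qed
qed

end

definition xb :: "nat \<Rightarrow> nat \<Rightarrow> bool" where
  "xb i u = (bit (i div 2) u \<noteq> odd i)"

definition cb :: "nat \<Rightarrow> nat \<Rightarrow> nat \<Rightarrow> nat \<Rightarrow> bool" where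
  "cb L d i j = (if j div L < d then xb i (j div L) else if j div L < 2 * d then \<not> xb i (j div L - d) else odd i)"

definition colE :: "nat \<Rightarrow> nat \<Rightarrow> (nat + nat) set \<Rightarrow> nat" where
  "colE L d e = (if cb L d (SOME i. Inl i \<in> e) (SOME j. Inr j \<in> e) then 1 else 0)"

lemma colE_eq[simp]: "colE L d {Inl i, Inr j} = (if cb L d i j then 1 else 0)"
proof -
  have a: "(SOME i'. Inl i' \<in> {Inl i, Inr j}) = i" by (rule some_equality) auto
  have b: "(SOME j'. Inr j' \<in> {Inl i, Inr j}) = j" by (rule some_equality) auto
  show ?thesis unfolding colE_def a b ..
qed

lemma colE_lt: "colE L d e < 2" by (simp add: colE_def)

lemma bit_high: "(x::nat) < 2 ^ d \<Longrightarrow> d \<le> u \<Longrightarrow> \<not> bit x u"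
proof -
  assume "x < 2 ^ d" "d \<le> u"
  then have "x < 2 ^ u" using power_increasing[of d u "2::nat"] by linarith
  then show ?thesis by (simp add: bit_iff_odd)
qed

lemma key_bits:
  assumes "i < 2 ^ d" "i' < 2 ^ d" "1 \<le> d" "i \<noteq> i'"
  shows "\<exists>u<d. xb i u \<noteq> xb i' u"
proof (cases "odd i = odd i'")
  case True
  have "i div 2 \<noteq> i' div 2"
  proof
    assume "i div 2 = i' div 2"
    moreover have "i mod 2 = i' mod 2" using True by (auto simp: mod2_eq_if)
    moreover have "i = i div 2 * 2 + i mod 2" "i' = i' div 2 * 2 + i' mod 2" by simp_all
    ultimately have "i = i'" by metis
    then show False using assms(4) by simp
  qed
  then obtain u where u: "bit (i div 2) u \<noteq> bit (i' div 2) u" using bit_eq_iff[of "i div 2" "i' div 2"] by auto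
  have hb: "i div 2 < 2 ^ d" "i' div 2 < 2 ^ d" using assms(1,2) by auto
  have "u < d"
  proof (rule ccontr)
    assume "\<not> u < d"
    then have "\<not> bit (i div 2) u" "\<not> bit (i' div 2) u" using bit_high hb by auto
    then show False using u by simp
  qed
  then show ?thesis using u True by (intro exI[of _ u]) (auto simp: xb_def)
next
  case False
  have d: "(2::nat) ^ d = 2 ^ (d - 1) * 2" using assms(3) by (cases d) auto
  have "i div 2 < 2 ^ (d - 1)" by (rule less_mult_imp_div_less) (use assms(1) d in simp)
  moreover have "i' div 2 < 2 ^ (d - 1)" by (rule less_mult_imp_div_less) (use assms(2) d in simp)
  ultimately have "\<not> bit (i div 2) (d - 1)" "\<not> bit (i' div 2) (d - 1)" using bit_high by auto
  then show ?thesis using False assms(3) by (intro exI[of _ "d - 1"]) (auto simp: xb_def)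
qed

lemma cb_pair: "cb L d (2 * k + 1) j = (\<not> cb L d (2 * k) j)"
  by (simp add: cb_def xb_def)

lemma Qp_col:
  assumes "2 * L \<le> M" "c < 2"
  shows "L \<le> card {i. i < M \<and> colE L d {Inl i, Inr j} = c}"
proof -
  define h where "h k = (if colE L d {Inl (2 * k), Inr j} = c then 2 * k else 2 * k + 1)" for k
  have inj: "inj_on h {..<L}"
  proof (rule inj_onI)
    fix a b assume "h a = h b"
    then have "h a div 2 = h b div 2" by simp
    then show "a = b" unfolding h_def by (auto split: if_splits)
  qed
  have sub: "h ` {..<L} \<subseteq> {i. i < M \<and> colE L d {Inl i, Inr j} = c}"
  proof
    fix x assume "x \<in> h ` {..<L}"
    then obtain k where k: "k < L" "x = h k" by auto
    have "x < M" using k assms(1) unfolding h_def by auto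
    moreover have "colE L d {Inl x, Inr j} = c"
      using k assms(2) cb_pair[of L d k j] unfolding h_def by (auto split: if_splits)
    ultimately show "x \<in> {i. i < M \<and> colE L d {Inl i, Inr j} = c}" by simp
  qed
  have "card (h ` {..<L}) = L" using card_image[OF inj] by simp
  moreover have "card (h ` {..<L}) \<le> card {i. i < M \<and> colE L d {Inl i, Inr j} = c}"
    by (rule card_mono[OF _ sub]) simp
  ultimately show ?thesis by simp
qed

lemma Pp_col:
  assumes "M \<le> 2 ^ d" "1 \<le> d" "2 * d * L \<le> n" "0 < L" "i < M" "i' < M" "i \<noteq> i'" "c < 2"
  shows "L \<le> card {j. j < n \<and> colE L d {Inl i, Inr j} = 1 - c \<and> colE L d {Inl i', Inr j} = c}"
proof -
  obtain u where u: "u < d" "xb i u \<noteq> xb i' u"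
    using key_bits[of i d i'] assms by auto
  define t where "t = (if (xb i u \<longleftrightarrow> c = 0) then u else u + d)"
  have t: "t < 2 * d" using u t_def by auto
  have sub: "{t * L..<t * L + L} \<subseteq> {j. j < n \<and> colE L d {Inl i, Inr j} = 1 - c \<and> colE L d {Inl i', Inr j} = c}"
  proof
    fix j assume j: "j \<in> {t * L..<t * L + L}"
    have jd: "j div L = t" using j by (intro div_nat_eqI) (auto simp: algebra_simps)
    have "j < (t + 1) * L" using j by (simp add: algebra_simps)
    also have "\<dots> \<le> 2 * d * L" using t by (intro mult_le_mono1) simp
    finally have jn: "j < n" using assms(3) by simp
    have "cb L d i j = (c = 0) \<and> cb L d i' j = (c \<noteq> 0)"
      using u jd t_def unfolding cb_def by (auto split: if_splits)
    then show "j \<in> {j. j < n \<and> colE L d {Inl i, Inr j} = 1 - c \<and> colE L d {Inl i', Inr j} = c}"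
      using jn assms(8) by auto
  qed
  have "card {t * L..<t * L + L} = L" by simp
  moreover have "card {t * L..<t * L + L} \<le> card {j. j < n \<and> colE L d {Inl i, Inr j} = 1 - c \<and> colE L d {Inl i', Inr j} = c}"
    by (rule card_mono[OF _ sub]) simp
  ultimately show ?thesis by simp
qed

lemma match_reach:
  assumes "\<forall>e\<in>ET. \<forall>f\<in>ET. e \<noteq> f \<longrightarrow> e \<inter> f = {}"
  shows "(\<lambda>x y. {x, y} \<in> ET)\<^sup>*\<^sup>* a b \<Longrightarrow> a = b \<or> {a, b} \<in> ET"
proof (induction rule: rtranclp_induct)
  case base then show ?case by simp
next
  case (step b c)
  from step.IH show ?case
  proof
    assume "a = b" then show ?thesis using step.hyps(2) by simp
  next
    assume ab: "{a, b} \<in> ET"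
    show ?thesis
    proof (cases "{a, b} = {b, c}")
      case True
      then have "a = c" by (simp add: doubleton_eq_iff) blast
      then show ?thesis by simp
    next
      case False
      then have "{a, b} \<inter> {b, c} = {}" using assms ab step.hyps(2) by simp
      then show ?thesis by simp
    qed
  qed
qed

lemma no_small:
  assumes "3 \<le> k" "1 \<le> l" "k \<le> M" "0 < n" "c < 2"
  shows "\<not> good_colouring k l (Kmn_V M n) (Kmn_E M n) c col"
proof
  assume g: "good_colouring k l (Kmn_V M n) (Kmn_E M n) c col"
  have "0 < M" using assms(1,3) by simp
  have "{Inl 0, Inr 0} \<in> Kmn_E M n" unfolding Kmn_E_def
    using \<open>0 < M\<close> assms(4) by fastforce
  note g1 = conjunct1[OF g[unfolded good_colouring_def]]
  note g2 = conjunct2[OF g[unfolded good_colouring_def]]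
  have "c \<noteq> 0" using g1 \<open>{Inl 0, Inr 0} \<in> Kmn_E M n\<close> by fastforce
  then have c1: "c = 1" using assms(5) by simp
  have col0: "\<forall>e\<in>Kmn_E M n. col e = 0" using g1 c1 by simp
  have "card (Inl ` {..<M} :: (nat + nat) set) = M" by (simp add: card_image)
  then obtain S where S: "S \<subseteq> (Inl ` {..<M} :: (nat + nat) set)" "card S = k" "finite S"
    using obtain_subset_with_card_n[of k "Inl ` {..<M} :: (nat + nat) set"] assms(3) by metis
  have SV: "S \<subseteq> Kmn_V M n" using S(1) unfolding Kmn_V_def by auto
  obtain T :: "nat \<Rightarrow> (nat + nat) set \<times> (nat + nat) set set" where
    T0: "\<forall>i<l. S_tree (Kmn_V M n) (Kmn_E M n) S (fst (T i)) (snd (T i)) \<and> proper_tree col (snd (T i))"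
    using g2[rule_format, OF conjI[OF SV S(2)]] by (elim exE conjE) simp
  have T: "S_tree (Kmn_V M n) (Kmn_E M n) S (fst (T 0)) (snd (T 0))" "proper_tree col (snd (T 0))"
    using T0 assms(2) by auto
  define ET where "ET = snd (T 0)"
  have ETE: "ET \<subseteq> Kmn_E M n" using T(1) unfolding S_tree_def ET_def by simp
  have disj: "\<forall>e\<in>ET. \<forall>f\<in>ET. e \<noteq> f \<longrightarrow> e \<inter> f = {}"
  proof (intro ballI impI)
    fix e f assume ef: "e \<in> ET" "f \<in> ET" "e \<noteq> f"
    have cz: "col e = 0" "col f = 0" using col0 ETE ef by auto
    show "e \<inter> f = {}"
    proof (rule ccontr)
      assume "e \<inter> f \<noteq> {}"
      then have "col e \<noteq> col f" using T(2) ef unfolding proper_tree_def ET_def by blast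
      then show False using \<open>col e = 0\<close> \<open>col f = 0\<close> by simp
    qed
  qed
  have conn: "connected_graph (fst (T 0)) ET" using T(1) unfolding S_tree_def is_tree_def ET_def by simp
  have SVT: "S \<subseteq> fst (T 0)" using T(1) unfolding S_tree_def by simp
  obtain S3 where S3: "S3 \<subseteq> S" "card S3 = 3" using obtain_subset_with_card_n[of 3 S] S(2) assms(1) by auto
  then obtain x y z where xyz: "S3 = {x, y, z}" "x \<noteq> y" "y \<noteq> z" "x \<noteq> z" by (auto simp: card_3_iff)
  have inV: "x \<in> fst (T 0)" "y \<in> fst (T 0)" "z \<in> fst (T 0)" using xyz S3 SVT by auto
  have cr: "\<And>a b. a \<in> fst (T 0) \<Longrightarrow> b \<in> fst (T 0) \<Longrightarrow> (\<lambda>x y. {x, y} \<in> ET)\<^sup>*\<^sup>* a b"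
  proof -
    have "\<forall>u\<in>fst (T 0). \<forall>v\<in>fst (T 0). (\<lambda>x y. {x, y} \<in> ET)\<^sup>*\<^sup>* u v"
      using conn unfolding connected_graph_def by (rule conjunct2)
    then show "\<And>a b. a \<in> fst (T 0) \<Longrightarrow> b \<in> fst (T 0) \<Longrightarrow> (\<lambda>x y. {x, y} \<in> ET)\<^sup>*\<^sup>* a b" by simp
  qed
  have "x = y \<or> {x, y} \<in> ET" by (rule match_reach[OF disj cr[OF inV(1) inV(2)]])
  then have "{x, y} \<in> ET" using xyz by simp
  moreover have "x = z \<or> {x, z} \<in> ET" by (rule match_reach[OF disj cr[OF inV(1) inV(3)]])
  then have "{x, z} \<in> ET" using xyz by simp
  moreover have "{x, y} \<noteq> {x, z}" using xyz by (auto simp: doubleton_eq_iff)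
  ultimately have "{x, y} \<inter> {x, z} = {}" using disj by (meson disj)
  then show False by simp
qed

lemma div_real_ge: "0 < K \<Longrightarrow> real n / real K - 1 \<le> real (n div K)"
proof -
  assume K: "0 < K"
  have "n = K * (n div K) + n mod K" by simp
  then have "real n = real K * real (n div K) + real (n mod K)" by (metis of_nat_add of_nat_mult)
  moreover have "real (n mod K) < real K" using K by simp
  ultimately have "real n < real K * (real (n div K) + 1)" by (simp add: algebra_simps)
  then have "real n / real K < real (n div K) + 1" using K by (simp add: divide_less_eq mult.commute)
  then show ?thesis by simp
qed

lemma asym:
  fixes C r :: real and K :: nat
  assumes "0 < C" "0 < K" "0 \<le> r"
  shows "eventually (\<lambda>n::nat. C * real n powr r \<le> 2 ^ (n div K)) sequentially"
proof -
  define R where "R = nat \<lceil>r\<rceil>"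
  have rR: "r \<le> real R" unfolding R_def using assms(3) le_of_int_ceiling[of r] by simp
  define a where "a = ln 2 / real K"
  have a: "0 < a" using assms by (simp add: a_def)
  have f: "filterlim (\<lambda>n::nat. a * real n) at_top sequentially"
    by (rule filterlim_tendsto_pos_mult_at_top[OF tendsto_const a filterlim_real_sequentially])
  have lim: "((\<lambda>n::nat. (a * real n) ^ R / exp (a * real n)) \<longlongrightarrow> 0) sequentially"
    using filterlim_compose[OF tendsto_power_div_exp_0 f] by simp
  define \<epsilon> where "\<epsilon> = a ^ R / (2 * C)"
  have \<epsilon>: "0 < \<epsilon>" using a assms by (simp add: \<epsilon>_def)
  have ev1: "eventually (\<lambda>n. (a * real n) ^ R / exp (a * real n) < \<epsilon>) sequentially"
    using order_tendstoD(2)[OF lim \<epsilon>] .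
  have ev2: "eventually (\<lambda>n::nat. 1 \<le> n) sequentially" by (rule eventually_ge_at_top)
  show ?thesis using ev1 ev2
  proof eventually_elim
    case (elim n)
    have n1: "1 \<le> real n" using elim(2) by simp
    have "real n powr r \<le> real n powr real R" by (rule powr_mono[OF rR n1])
    also have "\<dots> = real n ^ R" using n1 by (simp add: powr_realpow)
    finally have p1: "real n powr r \<le> real n ^ R" .
    have ex: "0 < exp (a * real n)" by simp
    have aR: "0 < a ^ R" using a by simp
    have e: "(a * real n) ^ R < \<epsilon> * exp (a * real n)" using elim(1) ex by (simp add: divide_less_eq)
    then have "a ^ R * real n ^ R < a ^ R * (exp (a * real n) / (2 * C))"
      by (simp add: power_mult_distrib \<epsilon>_def)
    then have "real n ^ R < exp (a * real n) / (2 * C)"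
      by (rule iffD1[OF mult_less_cancel_left_pos[OF aR]])
    then have p2: "C * real n ^ R < exp (a * real n) / 2" using assms(1) by (simp add: field_simps)
    have "exp (a * real n) = 2 powr (real n / real K)" unfolding a_def powr_def by (simp add: field_simps)
    then have "exp (a * real n) / 2 = 2 powr (real n / real K - 1)" by (simp add: powr_diff)
    also have "\<dots> \<le> 2 powr real (n div K)" by (rule powr_mono) (use div_real_ge[OF assms(2)] in auto)
    also have "\<dots> = 2 ^ (n div K)" by (simp add: powr_realpow)
    finally have p3: "exp (a * real n) / 2 \<le> 2 ^ (n div K)" .
    have "C * real n powr r \<le> C * real n ^ R" using p1 assms(1) by simp
    then show ?case using p2 p3 by linarith
  qed
qed


theorem theorem3p2:
  fixes m :: "nat \<Rightarrow> nat" and r :: real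
  assumes "r \<ge> 1"
    and "\<And>n. m n > 0"
    and "\<And>n. n \<le> m n"
    and "(\<lambda>n. real (m n)) \<in> O(\<lambda>n. real n powr r)"
  shows "\<forall>k l. k \<ge> 3 \<and> l \<ge> 1 \<longrightarrow>
           (\<exists>N3 > 0. \<forall>n \<ge> N3. proper_index k l (Kmn_V (m n) n) (Kmn_E (m n) n) = 2)"
proof (intro allI impI)
  fix k l :: nat assume kl: "k \<ge> 3 \<and> l \<ge> 1"
  define L where "L = 4 * k * l + 5 * k + 2"
  define K where "K = 2 * L"
  have Lpos: "0 < L" using L_def by simp
  have Kpos: "0 < K" using K_def Lpos by simp
  from assms(4) obtain C where C: "C > 0"
    "eventually (\<lambda>n. norm (real (m n)) \<le> C * norm (real n powr r)) at_top"
    by (elim landau_o.bigE)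
  have ev1: "eventually (\<lambda>n. real (m n) \<le> C * real n powr r) sequentially"
    using C(2) by simp
  have ev2: "eventually (\<lambda>n::nat. C * real n powr r \<le> 2 ^ (n div K)) sequentially"
    by (rule asym[OF C(1) Kpos]) (use assms(1) in simp)
  have ev3: "eventually (\<lambda>n::nat. K + k \<le> n) sequentially" by (rule eventually_ge_at_top)
  have "eventually (\<lambda>n. real (m n) \<le> C * real n powr r \<and> C * real n powr r \<le> 2 ^ (n div K) \<and> K + k \<le> n) sequentially"
    using ev1 ev2 ev3 by eventually_elim simp
  then obtain N where N: "\<And>n. N \<le> n \<Longrightarrow> real (m n) \<le> C * real n powr r \<and> C * real n powr r \<le> 2 ^ (n div K) \<and> K + k \<le> n"
    unfolding eventually_sequentially by blast
  show "\<exists>N3 > 0. \<forall>n \<ge> N3. proper_index k l (Kmn_V (m n) n) (Kmn_E (m n) n) = 2"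
  proof (intro exI[of _ "N + 1"] conjI allI impI)
    show "0 < N + 1" by simp
    fix n assume nN: "N + 1 \<le> n"
    define M where "M = m n"
    define d where "d = n div K"
    have Nn: "real (m n) \<le> C * real n powr r" "C * real n powr r \<le> 2 ^ (n div K)" "K + k \<le> n"
      using N[of n] nN by auto
    have "real (m n) \<le> 2 ^ (n div K)" using Nn(1,2) by linarith
    then have "real (m n) \<le> real ((2::nat) ^ (n div K))" by simp
    then have Md: "M \<le> 2 ^ d" unfolding M_def d_def by (simp only: of_nat_le_iff)
    have nM: "n \<le> M" using assms(3) M_def by simp
    have d1: "1 \<le> d" unfolding d_def using Nn(3) Kpos by (simp add: div_greater_zero_iff Suc_le_eq)
    have "K * (n div K) \<le> n" by simp
    then have dL: "2 * d * L \<le> n" unfolding d_def K_def by (simp add: algebra_simps)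
    have LM: "2 * L \<le> M" using Nn(3) nM K_def by simp
    have loc: "kmn M n L (colE L d)"
    proof
      show "\<And>e. colE L d e < 2" by (rule colE_lt)
      show "\<And>j c. j < n \<Longrightarrow> c < 2 \<Longrightarrow> L \<le> card {i. i < M \<and> colE L d {Inl i, Inr j} = c}"
        using Qp_col[OF LM] by blast
      show "\<And>i i' c. i < M \<Longrightarrow> i' < M \<Longrightarrow> i \<noteq> i' \<Longrightarrow> c < 2 \<Longrightarrow>
               L \<le> card {j. j < n \<and> colE L d {Inl i, Inr j} = 1 - c \<and> colE L d {Inl i', Inr j} = c}"
        using Pp_col[OF Md d1 dL Lpos] by blast
    qed
    have good: "good_colouring k l (Kmn_V M n) (Kmn_E M n) 2 (colE L d)"
      by (rule kmn.good_col[OF loc]) (use kl L_def in auto)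
    have kM: "k \<le> M" using Nn(3) nM by simp
    have npos: "0 < n" using Nn(3) kl by simp
    have no: "\<not> good_colouring k l (Kmn_V M n) (Kmn_E M n) c col" if "c < 2" for c and col :: "(nat + nat) set \<Rightarrow> nat"
      by (rule no_small) (use kl kM npos that in auto)
    show "proper_index k l (Kmn_V (m n) n) (Kmn_E (m n) n) = 2"
      unfolding proper_index_def M_def[symmetric]
    proof (rule Least_equality)
      show "\<exists>col. good_colouring k l (Kmn_V M n) (Kmn_E M n) 2 col" using good by blast
      fix c assume "\<exists>col. good_colouring k l (Kmn_V M n) (Kmn_E M n) c col"
      then show "2 \<le> c" using no by (meson not_le)
    qed
  qed
qed

end
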